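(* The Petersen graph $P$ satisfies $\mathcal{C}_f(P)=4$.
   Context: All graphs are finite and simple; $G=(V,E)$, $N(v)$ is the open neighborhood of $v$. The Petersen graph is the cubic graph on 10 vertices whose vertices are the 2-element subsets of $\{1,\dots,5\}$, two being adjacent iff they are disjoint. A dominating set is $D\subseteq V$ such that every vertex of $V\setminus D$ has a neighbor in $D$. For an integer $k\geq 1$, a $k$-fair dominating set is a dominating set $D$ such that $|N(v)\cap D|=k$ for every $v\in V\setminus D$. A fair dominating set is a $k$-fair dominating set for some integer $k\geq 1$. A fair coalition consists of two disjoint sets $A_1,A_2\subseteq V$, neither of which is a fair dominating set, such that $A_1\cup A_2$ is a fair dominating set. A fair coalition partition ($fc$-partition) of $G$ is a partition $\Upsilon=\{A_1,\dots,A_k\}$ of $V$ such that every $A_i$ is either a singleton fair dominating set of $G$, or is not a fair dominating set and forms a fair coalition with some other non-fair-dominating set $A_j\in\Upsilon$. The fair coalition number $\mathcal{C}_f(G)$ is the maximum number of parts of an $fc$-partition of $G$. *)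

theory Defs
  imports Main "HOL-Library.Disjoint_Sets"
begin

text \<open>A finite simple graph is given by a vertex set V and a symmetric,
irreflexive adjacency relation E.\<close>

definition nbhd :: "'a set \<Rightarrow> ('a \<Rightarrow> 'a \<Rightarrow> bool) \<Rightarrow> 'a \<Rightarrow> 'a set" where
  "nbhd V E v = {u \<in> V. E v u}"

definition dominating_set :: "'a set \<Rightarrow> ('a \<Rightarrow> 'a \<Rightarrow> bool) \<Rightarrow> 'a set \<Rightarrow> bool" where
  "dominating_set V E D \<longleftrightarrow> D \<subseteq> V \<and> (\<forall>v \<in> V - D. \<exists>u \<in> D. E v u)"

definition k_fair_dominating_set :: "'a set \<Rightarrow> ('a \<Rightarrow> 'a \<Rightarrow> bool) \<Rightarrow> nat \<Rightarrow> 'a set \<Rightarrow> bool" where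
  "k_fair_dominating_set V E k D \<longleftrightarrow>
     dominating_set V E D \<and> (\<forall>v \<in> V - D. card (nbhd V E v \<inter> D) = k)"

definition fair_dominating_set :: "'a set \<Rightarrow> ('a \<Rightarrow> 'a \<Rightarrow> bool) \<Rightarrow> 'a set \<Rightarrow> bool" where
  "fair_dominating_set V E D \<longleftrightarrow> (\<exists>k \<ge> 1. k_fair_dominating_set V E k D)"

definition fair_coalition :: "'a set \<Rightarrow> ('a \<Rightarrow> 'a \<Rightarrow> bool) \<Rightarrow> 'a set \<Rightarrow> 'a set \<Rightarrow> bool" where
  "fair_coalition V E A1 A2 \<longleftrightarrow>
     A1 \<subseteq> V \<and> A2 \<subseteq> V \<and> A1 \<inter> A2 = {} \<and>
     \<not> fair_dominating_set V E A1 \<and> \<not> fair_dominating_set V E A2 \<and>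
     fair_dominating_set V E (A1 \<union> A2)"

definition fc_partition :: "'a set \<Rightarrow> ('a \<Rightarrow> 'a \<Rightarrow> bool) \<Rightarrow> 'a set set \<Rightarrow> bool" where
  "fc_partition V E P \<longleftrightarrow> partition_on V P \<and>
     (\<forall>A \<in> P. (card A = 1 \<and> fair_dominating_set V E A) \<or>
              (\<not> fair_dominating_set V E A \<and> (\<exists>B \<in> P. B \<noteq> A \<and> fair_coalition V E A B)))"

definition fair_coalition_number :: "'a set \<Rightarrow> ('a \<Rightarrow> 'a \<Rightarrow> bool) \<Rightarrow> nat" where
  "fair_coalition_number V E = Max {card P | P. fc_partition V E P}"

definition petersen_V :: "nat set set" where
  "petersen_V = {S. S \<subseteq> {1..5} \<and> card S = 2}"

definition petersen_E :: "nat set \<Rightarrow> nat set \<Rightarrow> bool" where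
  "petersen_E S T \<longleftrightarrow> S \<inter> T = {}"

end

theory Submission
  imports Defs
begin

section \<open>A numbered copy of the Petersen graph\<close>

definition V10 :: "nat set" where "V10 = {0,1,2,3,4,5,6,7,8,9}"
definition nbl :: "nat list list" where "nbl = [[7,8,9],[5,6,9],[4,6,8],[4,5,7],[2,3,9],[1,3,8],[1,2,7],[0,3,6],[0,2,5],[0,1,4]]"
definition E10 :: "nat \<Rightarrow> nat \<Rightarrow> bool" where "E10 u v \<longleftrightarrow> u \<in> V10 \<and> v \<in> set (nbl ! u)"

abbreviation FD10 :: "nat set \<Rightarrow> bool" where "FD10 S \<equiv> fair_dominating_set V10 E10 S"

lemma card3:
  assumes "a \<noteq> b" "a \<noteq> c" "b \<noteq> c"
  shows "card ({a,b,c} \<inter> S) = of_bool (a \<in> S) + of_bool (b \<in> S) + of_bool (c \<in> S)"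
  using assms by (cases "a \<in> S"; cases "b \<in> S"; cases "c \<in> S") (auto simp: insert_Diff_if)

lemma nbhd0: "nbhd V10 E10 0 = {7,8,9}"
  by (auto simp: nbhd_def V10_def E10_def nbl_def)
lemma cnt0: "card (nbhd V10 E10 0 \<inter> S) = of_bool (7 \<in> S) + of_bool (8 \<in> S) + of_bool (9 \<in> S)"
  unfolding nbhd0 by (rule card3) simp_all

lemma nbhd1: "nbhd V10 E10 1 = {5,6,9}"
  by (auto simp: nbhd_def V10_def E10_def nbl_def)
lemma cnt1: "card (nbhd V10 E10 1 \<inter> S) = of_bool (5 \<in> S) + of_bool (6 \<in> S) + of_bool (9 \<in> S)"
  unfolding nbhd1 by (rule card3) simp_all

lemma nbhd2: "nbhd V10 E10 2 = {4,6,8}"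
  by (auto simp: nbhd_def V10_def E10_def nbl_def)
lemma cnt2: "card (nbhd V10 E10 2 \<inter> S) = of_bool (4 \<in> S) + of_bool (6 \<in> S) + of_bool (8 \<in> S)"
  unfolding nbhd2 by (rule card3) simp_all

lemma nbhd3: "nbhd V10 E10 3 = {4,5,7}"
  by (auto simp: nbhd_def V10_def E10_def nbl_def)
lemma cnt3: "card (nbhd V10 E10 3 \<inter> S) = of_bool (4 \<in> S) + of_bool (5 \<in> S) + of_bool (7 \<in> S)"
  unfolding nbhd3 by (rule card3) simp_all

lemma nbhd4: "nbhd V10 E10 4 = {2,3,9}"
  by (auto simp: nbhd_def V10_def E10_def nbl_def)
lemma cnt4: "card (nbhd V10 E10 4 \<inter> S) = of_bool (2 \<in> S) + of_bool (3 \<in> S) + of_bool (9 \<in> S)"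
  unfolding nbhd4 by (rule card3) simp_all

lemma nbhd5: "nbhd V10 E10 5 = {1,3,8}"
  by (auto simp: nbhd_def V10_def E10_def nbl_def)
lemma cnt5: "card (nbhd V10 E10 5 \<inter> S) = of_bool (1 \<in> S) + of_bool (3 \<in> S) + of_bool (8 \<in> S)"
  unfolding nbhd5 by (rule card3) simp_all

lemma nbhd6: "nbhd V10 E10 6 = {1,2,7}"
  by (auto simp: nbhd_def V10_def E10_def nbl_def)
lemma cnt6: "card (nbhd V10 E10 6 \<inter> S) = of_bool (1 \<in> S) + of_bool (2 \<in> S) + of_bool (7 \<in> S)"
  unfolding nbhd6 by (rule card3) simp_all

lemma nbhd7: "nbhd V10 E10 7 = {0,3,6}"
  by (auto simp: nbhd_def V10_def E10_def nbl_def)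
lemma cnt7: "card (nbhd V10 E10 7 \<inter> S) = of_bool (0 \<in> S) + of_bool (3 \<in> S) + of_bool (6 \<in> S)"
  unfolding nbhd7 by (rule card3) simp_all

lemma nbhd8: "nbhd V10 E10 8 = {0,2,5}"
  by (auto simp: nbhd_def V10_def E10_def nbl_def)
lemma cnt8: "card (nbhd V10 E10 8 \<inter> S) = of_bool (0 \<in> S) + of_bool (2 \<in> S) + of_bool (5 \<in> S)"
  unfolding nbhd8 by (rule card3) simp_all

lemma nbhd9: "nbhd V10 E10 9 = {0,1,4}"
  by (auto simp: nbhd_def V10_def E10_def nbl_def)
lemma cnt9: "card (nbhd V10 E10 9 \<inter> S) = of_bool (0 \<in> S) + of_bool (1 \<in> S) + of_bool (4 \<in> S)"
  unfolding nbhd9 by (rule card3) simp_all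


fun okc :: "nat list \<Rightarrow> bool" where
  "okc [] = True"
| "okc (c # r) = (1 \<le> c \<and> list_all (\<lambda>x. x = c) r)"

lemma okc_iff: "okc xs \<longleftrightarrow> xs = [] \<or> (\<exists>k\<ge>1. \<forall>x\<in>set xs. x = k)"
  by (cases xs) (auto simp: list_all_iff)

fun fdv :: "bool list \<Rightarrow> bool" where
  "fdv [b0,b1,b2,b3,b4,b5,b6,b7,b8,b9] = ((b0 \<or> b1 \<or> b2 \<or> b3 \<or> b4 \<or> b5 \<or> b6 \<or> b7 \<or> b8 \<or> b9) \<and> okc (concat [(if b0 then [] else [of_bool b7 + of_bool b8 + of_bool b9]), (if b1 then [] else [of_bool b5 + of_bool b6 + of_bool b9]), (if b2 then [] else [of_bool b4 + of_bool b6 + of_bool b8]), (if b3 then [] else [of_bool b4 + of_bool b5 + of_bool b7]), (if b4 then [] else [of_bool b2 + of_bool b3 + of_bool b9]), (if b5 then [] else [of_bool b1 + of_bool b3 + of_bool b8]), (if b6 then [] else [of_bool b1 + of_bool b2 + of_bool b7]), (if b7 then [] else [of_bool b0 + of_bool b3 + of_bool b6]), (if b8 then [] else [of_bool b0 + of_bool b2 + of_bool b5]), (if b9 then [] else [of_bool b0 + of_bool b1 + of_bool b4])]))"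
| "fdv _ = False"

definition chi :: "nat list \<Rightarrow> bool list" where
  "chi D = map (\<lambda>v. v \<in> set D) [0,1,2,3,4,5,6,7,8,9]"

definition fdl :: "nat list \<Rightarrow> bool" where "fdl D = fdv (chi D)"

lemma set_concat_if:
  "set (concat (map (\<lambda>v. if v \<in> S then [] else [f v]) xs)) = f ` (set xs - S)"
  by (induction xs) auto

lemma fd_char_gen:
  assumes S: "S \<subseteq> V10" and xs: "set xs = V10"
  shows "FD10 S \<longleftrightarrow> S \<noteq> {} \<and>
     okc (concat (map (\<lambda>v. if v \<in> S then [] else [card (nbhd V10 E10 v \<inter> S)]) xs))"
    (is "_ \<longleftrightarrow> _ \<and> okc ?l")
proof -
  have setl: "set ?l = (\<lambda>v. card (nbhd V10 E10 v \<inter> S)) ` (V10 - S)"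
    unfolding set_concat_if xs ..
  have V10ne: "V10 \<noteq> {}" unfolding V10_def by blast
  show ?thesis
  proof
    assume "FD10 S"
    then obtain k where k: "k \<ge> 1" "dominating_set V10 E10 S"
      "\<forall>v\<in>V10 - S. card (nbhd V10 E10 v \<inter> S) = k"
      unfolding fair_dominating_set_def k_fair_dominating_set_def by blast
    have "S \<noteq> {}"
    proof
      assume "S = {}"
      then show False using k(2) V10ne unfolding dominating_set_def by blast
    qed
    moreover have "okc ?l" unfolding okc_iff setl using k(1,3) by blast
    ultimately show "S \<noteq> {} \<and> okc ?l" by blast
  next
    assume a: "S \<noteq> {} \<and> okc ?l"
    obtain k where k: "k \<ge> 1" "\<forall>v\<in>V10 - S. card (nbhd V10 E10 v \<inter> S) = k"
    proof (cases "?l = []")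
      case True
      then have "set ?l = {}" by (simp only: list.set(1))
      then have "(\<lambda>v. card (nbhd V10 E10 v \<inter> S)) ` (V10 - S) = {}" unfolding setl .
      then have "V10 - S = {}" by (simp only: image_is_empty)
      then show ?thesis using that[of 1] by blast
    next
      case False
      then obtain k where "k \<ge> 1" "\<forall>x\<in>set ?l. x = k" using a okc_iff by blast
      then show ?thesis using that[of k] unfolding setl by blast
    qed
    have dom: "dominating_set V10 E10 S"
      unfolding dominating_set_def
    proof (intro conjI ballI)
      fix v assume v: "v \<in> V10 - S"
      then have "card (nbhd V10 E10 v \<inter> S) \<ge> 1" using k by auto
      then have "nbhd V10 E10 v \<inter> S \<noteq> {}" by auto
      then show "\<exists>u\<in>S. E10 v u" unfolding nbhd_def by blast
    qed (rule S)
    show "FD10 S" unfolding fair_dominating_set_def k_fair_dominating_set_def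
      using dom k by blast
  qed
qed

lemma set_vl: "set [0,1,2,3,4,5,6,7,8,9] = V10"
  unfolding V10_def by simp

lemmas fd_char = fd_char_gen[OF _ set_vl]

lemma ne_V10: "S \<subseteq> V10 \<Longrightarrow> S \<noteq> {} \<longleftrightarrow> (0 \<in> S \<or> 1 \<in> S \<or> 2 \<in> S \<or> 3 \<in> S \<or> 4 \<in> S \<or> 5 \<in> S \<or> 6 \<in> S \<or> 7 \<in> S \<or> 8 \<in> S \<or> 9 \<in> S)"
  by (auto simp: V10_def)

lemma fdl_correct:
  assumes "set D \<subseteq> V10"
  shows "FD10 (set D) \<longleftrightarrow> fdl D"
  unfolding fd_char[OF assms] ne_V10[OF assms] fdl_def chi_def
  by (simp only: list.map fdv.simps(1) cnt0 cnt1 cnt2 cnt3 cnt4 cnt5 cnt6 cnt7 cnt8 cnt9)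


section \<open>Enumerating sublists\<close>

fun exsub :: "(nat list \<Rightarrow> bool) \<Rightarrow> nat list \<Rightarrow> nat list \<Rightarrow> bool" where
  "exsub P [] W = P W"
| "exsub P (x # xs) W = (exsub P xs (x # W) \<or> exsub P xs W)"

fun allsub :: "(nat list \<Rightarrow> bool) \<Rightarrow> nat list \<Rightarrow> nat list \<Rightarrow> bool" where
  "allsub P [] W = P W"
| "allsub P (x # xs) W = (allsub P xs (x # W) \<and> allsub P xs W)"

lemma exsub_intro:
  assumes "distinct xs" "distinct W0" "set xs \<inter> set W0 = {}" "S \<subseteq> set xs"
    and "\<And>W. distinct W \<Longrightarrow> set W = S \<union> set W0 \<Longrightarrow> P W"
  shows "exsub P xs W0"
  using assms
proof (induction xs arbitrary: W0 S)
  case Nil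
  then show ?case by simp
next
  case (Cons x xs)
  show ?case
  proof (cases "x \<in> S")
    case True
    have "exsub P xs (x # W0)"
    proof (rule Cons.IH[where S = "S - {x}"])
      show "distinct xs" using Cons.prems by simp
      show "distinct (x # W0)" using Cons.prems by auto
      show "set xs \<inter> set (x # W0) = {}" using Cons.prems by auto
      show "S - {x} \<subseteq> set xs" using Cons.prems by auto
      show "P W" if "distinct W" "set W = S - {x} \<union> set (x # W0)" for W
      proof (rule Cons.prems(5)[OF that(1)])
        show "set W = S \<union> set W0" using that(2) True by auto
      qed
    qed
    then show ?thesis by simp
  next
    case False
    have "exsub P xs W0"
    proof (rule Cons.IH)
      show "distinct xs" using Cons.prems by simp
      show "S \<subseteq> set xs" using Cons.prems False by auto
    qed (use Cons.prems in auto)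
    then show ?thesis by simp
  qed
qed

lemma allsub_elim:
  assumes "allsub P xs W0" "distinct xs" "distinct W0" "set xs \<inter> set W0 = {}" "S \<subseteq> set xs"
  shows "\<exists>W. distinct W \<and> set W = S \<union> set W0 \<and> P W"
  using assms
proof (induction xs arbitrary: W0 S)
  case Nil
  then show ?case by auto
next
  case (Cons x xs)
  show ?case
  proof (cases "x \<in> S")
    case True
    have "\<exists>W. distinct W \<and> set W = (S - {x}) \<union> set (x # W0) \<and> P W"
      by (rule Cons.IH) (use Cons.prems in auto)
    then show ?thesis using True by (metis Un_insert_right insert_Diff list.simps(15) Un_insert_left)
  next
    case False
    show ?thesis
      by (rule Cons.IH) (use Cons.prems False in auto)
  qed
qed

definition smallP :: "nat list \<Rightarrow> bool" where
  "smallP W \<longleftrightarrow> 4 \<le> length W \<or> \<not> fdl W"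

lemma smallP_all: "allsub smallP [0,1,2,3,4,5,6,7,8,9] []"
  by code_simp

lemma FD_card:
  assumes "S \<subseteq> V10" "FD10 S"
  shows "4 \<le> card S"
proof -
  have sub: "S \<subseteq> set [0,1,2,3,4,5,6,7,8,9]" unfolding set_vl by (rule assms(1))
  obtain W where W: "distinct W" "set W = S" "smallP W"
    using allsub_elim[OF smallP_all _ _ _ sub] by auto
  have "fdl W" using fdl_correct[of W] W(2) assms by simp
  then have "4 \<le> length W" using W(3) by (simp add: smallP_def)
  then show ?thesis using W(1,2) distinct_card by metis
qed


section \<open>The exhaustive search\<close>

fun remv :: "nat list \<Rightarrow> nat list \<Rightarrow> nat list" where
  "remv W [] = []"
| "remv W (x # xs) = (if x \<in> set W then remv W xs else x # remv W xs)"

lemma set_remv: "set (remv W xs) = set xs - set W"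
  by (induction xs) auto

lemma distinct_remv: "distinct xs \<Longrightarrow> distinct (remv W xs)"
  by (induction xs) (auto simp: set_remv)

fun updU :: "nat list \<Rightarrow> nat list list \<Rightarrow> nat list list" where
  "updU W [] = []"
| "updU W (V # Vs) = (if fdl (V @ W) then updU W Vs else V # updU W Vs)"

lemma set_updU: "set (updU W Vs) = {V \<in> set Vs. \<not> fdl (V @ W)}"
  by (induction Vs) auto

fun hasP :: "nat list \<Rightarrow> nat list list \<Rightarrow> bool" where
  "hasP Z [] = False"
| "hasP Z (V # Vs) = (if 4 \<le> length Z + length V then (if fdl (Z @ V) then True else hasP Z Vs) else hasP Z Vs)"

lemma hasP_iff: "hasP Z Vs \<longleftrightarrow> (\<exists>V\<in>set Vs. 4 \<le> length Z + length V \<and> fdl (Z @ V))"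
  by (induction Vs) auto

definition pleaf :: "(nat list list \<Rightarrow> nat list list \<Rightarrow> nat list \<Rightarrow> bool) \<Rightarrow> nat list list \<Rightarrow> nat list
    \<Rightarrow> nat list list \<Rightarrow> nat list \<Rightarrow> nat list \<Rightarrow> bool" where
  "pleaf s K Z U' F W = (if W = [] then False else if length Z + length W < 4 then False else
     if Suc (length K) + length (remv W F) < 5 then False else if \<not> fdl (Z @ W) then False else
     if 4 \<le> length W \<and> fdl W then False else s (W # K) (updU W U') (remv W F))"

definition vleaf :: "(nat list list \<Rightarrow> nat list list \<Rightarrow> nat list \<Rightarrow> bool) \<Rightarrow> nat list list \<Rightarrow> nat list
    \<Rightarrow> nat list \<Rightarrow> bool" where
  "vleaf s K F' Z = (if Suc (length K) + length (remv Z F') < 5 then False else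
     if 4 \<le> length Z \<and> fdl Z then False else
     s (Z # K) (if length Z \<le> 2 \<and> \<not> hasP Z K then [Z] else []) (remv Z F'))"

primrec search :: "nat \<Rightarrow> nat list list \<Rightarrow> nat list list \<Rightarrow> nat list \<Rightarrow> bool" where
  "search 0 K U F = True"
| "search (Suc n) K U F = (if length K + length F < 5 then False else
     (case U of Z # U' \<Rightarrow> exsub (pleaf (search n) K Z U' F) F []
      | [] \<Rightarrow> (case F of [] \<Rightarrow> True | w # F' \<Rightarrow> exsub (vleaf (search n) K F') F' [w])))"

lemma search0: "\<not> search 12 [[0]] [[0]] [1,2,3,4,5,6,7,8,9]"
  by code_simp

lemma search1: "\<not> search 12 [[0,7]] [[0,7]] [1,2,3,4,5,6,8,9]"
  by code_simp

lemma search2: "\<not> search 12 [[0,1]] [[0,1]] [2,3,4,5,6,7,8,9]"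
  by code_simp

definition good :: "nat set set \<Rightarrow> bool" where
  "good Q \<longleftrightarrow> partition_on V10 Q \<and> 5 \<le> card Q \<and> (\<forall>A\<in>Q. \<not> FD10 A) \<and>
     (\<forall>A\<in>Q. \<exists>B\<in>Q. B \<noteq> A \<and> FD10 (A \<union> B))"

definition sinv :: "nat set set \<Rightarrow> nat list list \<Rightarrow> nat list list \<Rightarrow> nat list \<Rightarrow> bool" where
  "sinv Q K U F \<longleftrightarrow> (\<forall>Z\<in>set K. set Z \<in> Q) \<and>
     (\<forall>Z\<in>set U. set Z \<in> Q \<and> (\<forall>V\<in>set K. set V \<noteq> set Z \<longrightarrow> \<not> FD10 (set Z \<union> set V))) \<and>
     \<Union>(Q - set (map set K)) = set F \<and> distinct F"

lemma finite_V10: "finite V10" by (simp add: V10_def)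

lemma card_le_Union:
  assumes "finite (\<Union>C)" "{} \<notin> C" "disjoint C"
  shows "card C \<le> card (\<Union>C)"
proof -
  have fin: "\<And>A. A \<in> C \<Longrightarrow> finite A" using assms(1) by (meson Union_upper finite_subset)
  have finC: "finite C" using assms(1) by (meson finite_UnionD)
  have "card C = (\<Sum>A\<in>C. 1)" by simp
  also have "\<dots> \<le> (\<Sum>A\<in>C. card A)"
  proof (rule sum_mono)
    fix A assume "A \<in> C"
    then show "1 \<le> card A" using fin assms(2) by (metis One_nat_def Suc_leI card_gt_0_iff)
  qed
  also have "\<dots> = card (\<Union>C)" using card_Union_disjoint[OF assms(3) fin] by simp
  finally show ?thesis .
qed

lemma good_bound:
  assumes "good Q" "sinv Q K U F"
  shows "card Q \<le> length K + length F"
proof -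
  have P: "partition_on V10 Q" using assms(1) by (simp add: good_def)
  let ?KS = "set (map set K)"
  have "Q \<subseteq> ?KS \<union> (Q - ?KS)" by blast
  have finQ: "finite Q" using finite_elements[OF finite_V10 P] .
  have "card Q \<le> card (?KS \<union> (Q - ?KS))" by (rule card_mono) (use finQ in auto)
  also have "\<dots> \<le> card ?KS + card (Q - ?KS)" by (rule card_Un_le)
  also have "card ?KS \<le> length K" by (metis card_length length_map)
  also have "card (Q - ?KS) \<le> card (\<Union>(Q - ?KS))"
  proof (rule card_le_Union)
    show "finite (\<Union>(Q - ?KS))" using assms(2) by (simp add: sinv_def)
    show "{} \<notin> Q - ?KS" using partition_onD3[OF P] by blast
    show "disjoint (Q - ?KS)" using partition_onD2[OF P] by (rule pairwise_subset) blast
  qed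
  also have "card (\<Union>(Q - ?KS)) \<le> length F" using assms(2) by (simp add: sinv_def card_length)
  finally show ?thesis by simp
qed

lemma part_disj:
  assumes "partition_on V10 Q" "A \<in> Q" "B \<in> Q" "A \<noteq> B"
  shows "A \<inter> B = {}"
  using partition_onD2[OF assms(1)] assms(2-4) by (auto simp: disjoint_def)

lemma part_sub: "partition_on V10 Q \<Longrightarrow> A \<in> Q \<Longrightarrow> A \<subseteq> V10"
  using partition_onD1 by blast

lemma sinv_step:
  assumes g: "good Q" and inv: "sinv Q K U F" and B: "B \<in> Q" "B \<notin> set (map set K)"
    and W: "set W = B" and U2: "\<forall>Z\<in>set U2. set Z \<in> Q \<and> (\<forall>V\<in>set (W # K). set V \<noteq> set Z \<longrightarrow> \<not> FD10 (set Z \<union> set V))"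
  shows "sinv Q (W # K) U2 (remv W F)"
proof -
  have P: "partition_on V10 Q" using g by (simp add: good_def)
  let ?KS = "set (map set K)"
  have eq: "Q - set (map set (W # K)) = (Q - ?KS) - {B}" using W by auto
  have "\<Union>((Q - ?KS) - {B}) = \<Union>(Q - ?KS) - B"
  proof
    show "\<Union>((Q - ?KS) - {B}) \<subseteq> \<Union>(Q - ?KS) - B"
      using part_disj[OF P _ B(1)] by blast
    show "\<Union>(Q - ?KS) - B \<subseteq> \<Union>((Q - ?KS) - {B})" by blast
  qed
  then have "\<Union>(Q - set (map set (W # K))) = set (remv W F)"
    using inv eq W by (simp add: sinv_def set_remv)
  then show ?thesis using inv U2 B W by (auto simp: sinv_def distinct_remv)
qed

lemma search_sound:
  assumes "good Q" "sinv Q K U F"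
  shows "search n K U F"
  using assms(2)
proof (induction n arbitrary: K U F)
  case 0
  then show ?case by simp
next
  case (Suc n)
  have g: "good Q" by (rule assms(1))
  have P: "partition_on V10 Q" using g by (simp add: good_def)
  have c5: "5 \<le> card Q" using g by (simp add: good_def)
  let ?KS = "set (map set K)"
  have bnd: "\<not> length K + length F < 5" using good_bound[OF g Suc.prems] c5 by simp
  have UF: "\<Union>(Q - ?KS) = set F" and dF: "distinct F" using Suc.prems by (auto simp: sinv_def)
  show ?case
  proof (cases U)
    case (Cons Z U')
    have ZQ: "set Z \<in> Q" and Znp: "\<forall>V\<in>set K. set V \<noteq> set Z \<longrightarrow> \<not> FD10 (set Z \<union> set V)"
      using Suc.prems Cons by (auto simp: sinv_def)
    have allp: "\<forall>A\<in>Q. \<exists>B\<in>Q. B \<noteq> A \<and> FD10 (A \<union> B)" using g unfolding good_def by blast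
    obtain B where B: "B \<in> Q" "B \<noteq> set Z" "FD10 (set Z \<union> B)" using allp ZQ by blast
    have BK: "B \<notin> ?KS"
    proof
      assume "B \<in> ?KS"
      then obtain V where "V \<in> set K" "set V = B" by auto
      then show False using Znp B by auto
    qed
    have BF: "B \<subseteq> set F" using UF B(1) BK by blast
    have Bne: "B \<noteq> {}" using partition_onD3[OF P] B(1) by blast
    have BnFD: "\<not> FD10 B" using g B(1) by (simp add: good_def)
    have ZV: "set Z \<subseteq> V10" using part_sub[OF P ZQ] .
    have BV: "B \<subseteq> V10" using part_sub[OF P B(1)] .
    have "exsub (pleaf (search n) K Z U' F) F []"
    proof (rule exsub_intro[where S = B])
      fix W assume W: "distinct W" "set W = B \<union> set []"
      then have W': "set W = B" by simp
      have lenW: "length W = card B" using W W' distinct_card by metis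
      have inv2: "sinv Q (W # K) (updU W U') (remv W F)"
      proof (rule sinv_step[OF g Suc.prems B(1) BK W'])
        show "\<forall>Z'\<in>set (updU W U'). set Z' \<in> Q \<and> (\<forall>V\<in>set (W # K). set V \<noteq> set Z' \<longrightarrow> \<not> FD10 (set Z' \<union> set V))"
        proof (intro ballI conjI impI)
          fix Z' assume Z': "Z' \<in> set (updU W U')"
          then have Z'U: "Z' \<in> set U'" and nf: "\<not> fdl (Z' @ W)" by (auto simp: set_updU)
          show "set Z' \<in> Q" using Suc.prems Cons Z'U by (auto simp: sinv_def)
          then have Z'V: "set Z' \<subseteq> V10" using part_sub[OF P] by blast
          fix V assume V: "V \<in> set (W # K)" "set V \<noteq> set Z'"
          show "\<not> FD10 (set Z' \<union> set V)"
          proof (cases "V = W")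
            case True
            then show ?thesis using nf fdl_correct[of "Z' @ W"] Z'V BV W' by auto
          next
            case False
            then have "V \<in> set K" using V by simp
            then show ?thesis using Suc.prems Cons Z'U V(2) by (auto simp: sinv_def)
          qed
        qed
      qed
      have c4: "4 \<le> card (set Z \<union> B)" using FD_card[OF _ B(3)] ZV BV by blast
      have "card (set Z \<union> B) \<le> length Z + length W"
        using card_Un_le[of "set Z" B] card_length[of Z] lenW by linarith
      then have l4: "\<not> length Z + length W < 4" using c4 by linarith
      have b5: "\<not> Suc (length K) + length (remv W F) < 5" using good_bound[OF g inv2] c5 by simp
      have fz: "fdl (Z @ W)" using fdl_correct[of "Z @ W"] ZV BV W' B(3) by simp
      have fw: "\<not> fdl W" using fdl_correct[of W] BV W' BnFD by simp
      have "W \<noteq> []" using W' Bne by auto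
      then show "pleaf (search n) K Z U' F W"
        unfolding pleaf_def using l4 b5 fz fw Suc.IH[OF inv2] by simp
    qed (use dF BF in auto)
    then show ?thesis using bnd Cons by simp
  next
    case Nil
    show ?thesis
    proof (cases F)
      case Nil
      then show ?thesis using bnd \<open>U = []\<close> by simp
    next
      case (Cons w F')
      have "w \<in> \<Union>(Q - ?KS)" using UF Cons by simp
      then obtain B where B: "B \<in> Q" "B \<notin> ?KS" "w \<in> B" by blast
      have BF: "B \<subseteq> set F" using UF B by blast
      have BnFD: "\<not> FD10 B" using g B(1) by (simp add: good_def)
      have BV: "B \<subseteq> V10" using part_sub[OF P B(1)] .
      have dF': "distinct F'" "w \<notin> set F'" using dF Cons by auto
      have "exsub (vleaf (search n) K F') F' [w]"
      proof (rule exsub_intro[where S = "B - {w}"])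
        fix W assume W: "distinct W" "set W = (B - {w}) \<union> set [w]"
        then have W': "set W = B" using B(3) by auto
        let ?U2 = "if length W \<le> 2 \<and> \<not> hasP W K then [W] else []"
        have inv2: "sinv Q (W # K) ?U2 (remv W F')"
        proof -
          have "sinv Q (W # K) ?U2 (remv W F)"
          proof (rule sinv_step[OF g Suc.prems B(1) B(2) W'])
            show "\<forall>Z'\<in>set ?U2. set Z' \<in> Q \<and> (\<forall>V\<in>set (W # K). set V \<noteq> set Z' \<longrightarrow> \<not> FD10 (set Z' \<union> set V))"
            proof (cases "length W \<le> 2 \<and> \<not> hasP W K")
              case True
              have "\<forall>V\<in>set K. \<not> FD10 (set W \<union> set V)"
              proof (intro ballI notI)
                fix V assume V: "V \<in> set K" and fd: "FD10 (set W \<union> set V)"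
                have VV: "set V \<subseteq> V10" using Suc.prems V part_sub[OF P] by (auto simp: sinv_def)
                have "4 \<le> card (set W \<union> set V)" using FD_card[OF _ fd] VV BV W' by blast
                also have "\<dots> \<le> length W + length V"
                  using card_Un_le[of "set W" "set V"] card_length[of W] card_length[of V] by linarith
                finally have "4 \<le> length W + length V" .
                moreover have "fdl (W @ V)" using fdl_correct[of "W @ V"] fd VV BV W' by simp
                ultimately show False using True V hasP_iff by blast
              qed
              then show ?thesis using True B(1) W' by auto
            next
              case False
              show ?thesis by (subst if_not_P[OF False]) simp
            qed
          qed
          moreover have "remv W F = remv W F'" using Cons W' B(3) by simp
          ultimately show ?thesis by simp
        qed
        have b5: "\<not> Suc (length K) + length (remv W F') < 5" using good_bound[OF g inv2] c5 by simp
        have fw: "\<not> fdl W" using fdl_correct[of W] BV W' BnFD by simp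
        show "vleaf (search n) K F' W"
          unfolding vleaf_def using b5 fw Suc.IH[OF inv2] by simp
      qed (use dF' BF Cons in auto)
      then show ?thesis using bnd \<open>U = []\<close> Cons by simp
    qed
  qed
qed


section \<open>Graph isomorphisms preserve fair coalition partitions\<close>

lemma iso_nbhd:
  assumes bij: "bij_betw h V1 V2" and adj: "\<forall>u\<in>V1. \<forall>v\<in>V1. E1 u v \<longleftrightarrow> E2 (h u) (h v)"
    and v: "v \<in> V1"
  shows "nbhd V2 E2 (h v) = h ` nbhd V1 E1 v"
proof
  have img: "h ` V1 = V2" using bij by (simp add: bij_betw_def)
  show "nbhd V2 E2 (h v) \<subseteq> h ` nbhd V1 E1 v"
  proof
    fix w assume "w \<in> nbhd V2 E2 (h v)"
    then have w: "w \<in> V2" "E2 (h v) w" by (auto simp: nbhd_def)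
    then obtain u where u: "u \<in> V1" "w = h u" using img by blast
    then have "E1 v u" using adj v w(2) by blast
    then show "w \<in> h ` nbhd V1 E1 v" using u by (auto simp: nbhd_def)
  qed
  show "h ` nbhd V1 E1 v \<subseteq> nbhd V2 E2 (h v)"
  proof
    fix w assume "w \<in> h ` nbhd V1 E1 v"
    then obtain u where u: "u \<in> V1" "E1 v u" "w = h u" by (auto simp: nbhd_def)
    then have "E2 (h v) w" using adj v by blast
    moreover have "w \<in> V2" using u img by blast
    ultimately show "w \<in> nbhd V2 E2 (h v)" by (auto simp: nbhd_def)
  qed
qed

lemma iso_kfair:
  assumes bij: "bij_betw h V1 V2" and adj: "\<forall>u\<in>V1. \<forall>v\<in>V1. E1 u v \<longleftrightarrow> E2 (h u) (h v)"
    and D: "D \<subseteq> V1"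
  shows "k_fair_dominating_set V2 E2 k (h ` D) \<longleftrightarrow> k_fair_dominating_set V1 E1 k D"
proof -
  have inj: "inj_on h V1" and img: "h ` V1 = V2" using bij by (auto simp: bij_betw_def)
  have diff: "V2 - h ` D = h ` (V1 - D)" using inj_on_image_set_diff[OF inj _ D] img by simp
  have sub: "h ` D \<subseteq> V2" using D img by blast
  have nsub: "nbhd V1 E1 v \<subseteq> V1" for v by (auto simp: nbhd_def)
  have cardeq: "card (nbhd V2 E2 (h v) \<inter> h ` D) = card (nbhd V1 E1 v \<inter> D)" if v: "v \<in> V1" for v
  proof -
    have "nbhd V2 E2 (h v) \<inter> h ` D = h ` (nbhd V1 E1 v \<inter> D)"
      unfolding iso_nbhd[OF bij adj v] using inj_on_image_Int[OF inj nsub D] by simp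
    moreover have "inj_on h (nbhd V1 E1 v \<inter> D)" using inj_on_subset[OF inj, of "nbhd V1 E1 v \<inter> D"] D by blast
    ultimately show ?thesis by (simp add: card_image)
  qed
  have domeq: "(\<forall>w\<in>V2 - h ` D. \<exists>u\<in>h ` D. E2 w u) \<longleftrightarrow> (\<forall>v\<in>V1 - D. \<exists>u\<in>D. E1 v u)"
    unfolding diff using adj D by fastforce
  have ceq: "(\<forall>w\<in>V2 - h ` D. card (nbhd V2 E2 w \<inter> h ` D) = k) \<longleftrightarrow>
      (\<forall>v\<in>V1 - D. card (nbhd V1 E1 v \<inter> D) = k)"
    unfolding diff using cardeq by auto
  show ?thesis
    unfolding k_fair_dominating_set_def dominating_set_def using sub D domeq ceq by blast
qed

lemma iso_FD:
  assumes bij: "bij_betw h V1 V2" and adj: "\<forall>u\<in>V1. \<forall>v\<in>V1. E1 u v \<longleftrightarrow> E2 (h u) (h v)"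
    and D: "D \<subseteq> V1"
  shows "fair_dominating_set V2 E2 (h ` D) \<longleftrightarrow> fair_dominating_set V1 E1 D"
  unfolding fair_dominating_set_def using iso_kfair[OF bij adj D] by blast

lemma iso_fc:
  assumes bij: "bij_betw h V1 V2" and adj: "\<forall>u\<in>V1. \<forall>v\<in>V1. E1 u v \<longleftrightarrow> E2 (h u) (h v)"
    and P: "fc_partition V1 E1 P"
  shows "fc_partition V2 E2 ((`) h ` P) \<and> card ((`) h ` P) = card P"
proof -
  have inj: "inj_on h V1" and img: "h ` V1 = V2" using bij by (auto simp: bij_betw_def)
  have PP: "partition_on V1 P" using P by (simp add: fc_partition_def)
  have subV: "A \<subseteq> V1" if "A \<in> P" for A using PP that by (auto simp: partition_on_def)
  have injP: "inj_on ((`) h) P"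
  proof (rule inj_onI)
    fix A B assume "A \<in> P" "B \<in> P" "h ` A = h ` B"
    then show "A = B" using inj_on_image_eq_iff[OF inj subV subV] by blast
  qed
  have ne: "{} \<notin> P" using PP by (simp add: partition_on_def)
  have "(`) h ` P - {{}} = (`) h ` P" using ne by auto
  then have part2: "partition_on V2 ((`) h ` P)"
    using partition_on_inj_image[OF PP inj] img by simp
  have main: "(card A' = 1 \<and> fair_dominating_set V2 E2 A') \<or>
      (\<not> fair_dominating_set V2 E2 A' \<and> (\<exists>B'\<in>(`) h ` P. B' \<noteq> A' \<and> fair_coalition V2 E2 A' B'))"
    if A': "A' \<in> (`) h ` P" for A'
  proof -
    obtain A where A: "A \<in> P" "A' = h ` A" using A' by blast
    have AV: "A \<subseteq> V1" using subV A(1) .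
    have cA: "card A' = card A" using A(2) inj_on_subset[OF inj AV] by (simp add: card_image)
    have fA: "fair_dominating_set V2 E2 A' \<longleftrightarrow> fair_dominating_set V1 E1 A" using A(2) iso_FD[OF bij adj AV] by simp
    have "(card A = 1 \<and> fair_dominating_set V1 E1 A) \<or>
      (\<not> fair_dominating_set V1 E1 A \<and> (\<exists>B\<in>P. B \<noteq> A \<and> fair_coalition V1 E1 A B))"
      using P A(1) by (simp add: fc_partition_def)
    then show ?thesis
    proof
      assume "card A = 1 \<and> fair_dominating_set V1 E1 A"
      then show ?thesis using cA fA by simp
    next
      assume a: "\<not> fair_dominating_set V1 E1 A \<and> (\<exists>B\<in>P. B \<noteq> A \<and> fair_coalition V1 E1 A B)"
      then obtain B where B: "B \<in> P" "B \<noteq> A" "fair_coalition V1 E1 A B" by blast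
      have BV: "B \<subseteq> V1" using subV B(1) .
      have fB: "fair_dominating_set V2 E2 (h ` B) \<longleftrightarrow> fair_dominating_set V1 E1 B" using iso_FD[OF bij adj BV] .
      have fAB: "fair_dominating_set V2 E2 (h ` A \<union> h ` B) \<longleftrightarrow> fair_dominating_set V1 E1 (A \<union> B)"
        using iso_FD[OF bij adj, of "A \<union> B"] AV BV by (simp add: image_Un)
      have disj: "h ` A \<inter> h ` B = {}"
        using B(3) inj_on_image_Int[OF inj AV BV] by (simp add: fair_coalition_def)
      have neq: "h ` B \<noteq> h ` A" using B(1,2) A(1) injP by (meson inj_on_eq_iff)
      have "fair_coalition V2 E2 A' (h ` B)"
        unfolding fair_coalition_def A(2) using B(3) fA fB fAB disj AV BV img A(2)
        by (auto simp: fair_coalition_def)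
      then show ?thesis using a fA B(1) neq A(2) by blast
    qed
  qed
  have "fc_partition V2 E2 ((`) h ` P)"
    unfolding fc_partition_def using part2 main by blast
  moreover have "card ((`) h ` P) = card P" using injP by (rule card_image)
  ultimately show ?thesis by blast
qed

lemma iso_inv:
  assumes bij: "bij_betw h V1 V2" and adj: "\<forall>u\<in>V1. \<forall>v\<in>V1. E1 u v \<longleftrightarrow> E2 (h u) (h v)"
  shows "bij_betw (inv_into V1 h) V2 V1 \<and> (\<forall>u\<in>V2. \<forall>v\<in>V2. E2 u v \<longleftrightarrow> E1 (inv_into V1 h u) (inv_into V1 h v))"
proof -
  have b: "bij_betw (inv_into V1 h) V2 V1" using bij by (rule bij_betw_inv_into)
  have "E2 u v \<longleftrightarrow> E1 (inv_into V1 h u) (inv_into V1 h v)" if "u \<in> V2" "v \<in> V2" for u v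
  proof -
    have iu: "inv_into V1 h u \<in> V1" "h (inv_into V1 h u) = u"
      using that(1) bij by (auto simp: bij_betw_def inv_into_into f_inv_into_f)
    have iv: "inv_into V1 h v \<in> V1" "h (inv_into V1 h v) = v"
      using that(2) bij by (auto simp: bij_betw_def inv_into_into f_inv_into_f)
    show ?thesis using adj iu iv by metis
  qed
  then show ?thesis using b by blast
qed

section \<open>Automorphisms of the numbered Petersen graph\<close>

lemma V10_iff: "u \<in> V10 \<longleftrightarrow> u < 10"
  by (auto simp: V10_def)

definition is_aut :: "nat list \<Rightarrow> bool" where
  "is_aut p \<longleftrightarrow> length p = 10 \<and> sort p = [0,1,2,3,4,5,6,7,8,9] \<and>
     list_all (\<lambda>u. sort (map ((!) p) (nbl ! u)) = sort (nbl ! (p ! u))) [0,1,2,3,4,5,6,7,8,9]"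

lemma nbl_sub: "u \<in> V10 \<Longrightarrow> set (nbl ! u) \<subseteq> V10"
  unfolding V10_iff by (auto simp: nbl_def V10_def less_Suc_eq numeral_eq_Suc)

lemma is_aut_iso:
  assumes "is_aut p"
  shows "bij_betw ((!) p) V10 V10 \<and> (\<forall>u\<in>V10. \<forall>v\<in>V10. E10 u v \<longleftrightarrow> E10 (p ! u) (p ! v))"
proof -
  have len: "length p = 10" and srt: "sort p = [0,1,2,3,4,5,6,7,8,9]"
    and nb: "list_all (\<lambda>u. sort (map ((!) p) (nbl ! u)) = sort (nbl ! (p ! u))) [0,1,2,3,4,5,6,7,8,9]"
    using assms by (auto simp: is_aut_def)
  have setp: "set p = V10" using srt set_vl by (metis set_sort)
  have "distinct (sort p)" unfolding srt by simp
  then have dp: "distinct p" by simp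
  have inj: "inj_on ((!) p) V10"
  proof (rule inj_onI)
    fix u v assume "u \<in> V10" "v \<in> V10" "p ! u = p ! v"
    then show "u = v" using dp len nth_eq_iff_index_eq unfolding V10_iff by metis
  qed
  have img: "(!) p ` V10 = V10"
  proof -
    have e1: "V10 = {..<length p}" using len V10_iff by auto
    have e2: "set p = (!) p ` {..<length p}" by (auto simp: set_conv_nth)
    show ?thesis unfolding e1 using e2 setp e1 by simp
  qed
  have nbs: "(!) p ` set (nbl ! u) = set (nbl ! (p ! u))" if "u \<in> V10" for u
  proof -
    have uin: "u \<in> set [0,1,2,3,4,5,6,7,8,9]" by (simp only: set_vl that)
    have "\<forall>u\<in>set [0,1,2,3,4,5,6,7,8,9]. sort (map ((!) p) (nbl ! u)) = sort (nbl ! (p ! u))"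
      using nb by (simp only: list_all_iff)
    then have "sort (map ((!) p) (nbl ! u)) = sort (nbl ! (p ! u))" using uin by (rule bspec)
    then show ?thesis by (metis list.set_map set_sort)
  qed
  have adj: "E10 u v \<longleftrightarrow> E10 (p ! u) (p ! v)" if u: "u \<in> V10" and v: "v \<in> V10" for u v
  proof -
    have pu: "p ! u \<in> V10" using img u by blast
    have "E10 (p ! u) (p ! v) \<longleftrightarrow> p ! v \<in> (!) p ` set (nbl ! u)" using nbs[OF u] pu by (simp add: E10_def)
    also have "\<dots> \<longleftrightarrow> v \<in> set (nbl ! u)"
      using inj_on_image_mem_iff[OF inj v nbl_sub[OF u]] .
    finally show ?thesis using u by (simp add: E10_def)
  qed
  show ?thesis using inj img adj by (auto simp: bij_betw_def)
qed

definition autT :: "(nat \<times> nat \<times> nat list) list" where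
  "autT = [(0,0,[0,1,2,3,4,5,6,7,8,9]), (1,1,[1,0,2,3,4,7,8,5,6,9]), (2,2,[1,2,0,3,7,4,8,5,9,6]), (3,3,[1,2,3,0,7,8,4,9,5,6]), (4,4,[1,4,7,8,0,2,3,5,6,9]), (5,5,[1,7,4,8,2,0,3,5,9,6]), (6,6,[1,7,8,4,2,3,0,9,5,6]), (7,7,[7,1,4,8,2,5,9,0,3,6]), (8,8,[7,1,8,4,2,9,5,3,0,6]), (9,9,[7,8,1,4,9,2,5,3,6,0]), (0,1,[0,1,2,3,4,5,6,7,8,9]), (0,2,[0,2,1,3,5,4,6,7,9,8]), (0,3,[0,2,3,1,5,6,4,9,7,8]), (0,4,[0,4,5,6,1,2,3,7,8,9]), (0,5,[0,5,4,6,2,1,3,7,9,8]), (0,6,[0,5,6,4,2,3,1,9,7,8]), (0,7,[0,1,2,3,4,5,6,7,8,9]), (0,8,[0,1,3,2,4,6,5,8,7,9]), (0,9,[0,3,1,2,6,4,5,8,9,7]), (1,2,[2,0,1,3,5,7,9,4,6,8]), (1,3,[2,0,3,1,5,9,7,6,4,8]), (1,4,[4,0,5,6,1,7,8,2,3,9]), (1,5,[1,0,2,3,4,7,8,5,6,9]), (1,6,[1,0,3,2,4,8,7,6,5,9]), (1,7,[5,0,4,6,2,7,9,1,3,8]), (1,8,[5,0,6,4,2,9,7,3,1,8]), (1,9,[3,0,1,2,6,8,9,4,5,7]), (2,3,[2,3,0,1,9,5,7,6,8,4]), (2,4,[1,2,0,3,7,4,8,5,9,6]), (2,5,[4,5,0,6,7,1,8,2,9,3]),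 (2,6,[1,3,0,2,8,4,7,6,9,5]), (2,7,[5,4,0,6,7,2,9,1,8,3]), (2,8,[3,1,0,2,8,6,9,4,7,5]), (2,9,[5,6,0,4,9,2,7,3,8,1]), (3,4,[1,2,3,0,7,8,4,9,5,6]), (3,5,[1,3,2,0,8,7,4,9,6,5]), (3,6,[4,5,6,0,7,8,1,9,2,3]), (3,7,[3,1,2,0,8,9,6,7,4,5]), (3,8,[5,4,6,0,7,9,2,8,1,3]), (3,9,[5,6,4,0,9,7,2,8,3,1]), (4,5,[2,5,7,9,0,1,3,4,6,8]), (4,6,[2,5,9,7,0,3,1,6,4,8]), (4,7,[5,2,7,9,0,4,6,1,3,8]), (4,8,[5,2,9,7,0,6,4,3,1,8]), (4,9,[3,6,8,9,0,1,2,4,5,7]), (5,6,[2,9,5,7,3,0,1,6,8,4]), (5,7,[5,7,2,9,4,0,6,1,8,3]), (5,8,[3,8,6,9,1,0,2,4,7,5]), (5,9,[5,9,2,7,6,0,4,3,8,1]), (6,7,[3,8,9,6,1,2,0,7,4,5]), (6,8,[5,7,9,2,4,6,0,8,1,3]), (6,9,[5,9,7,2,6,4,0,8,3,1]), (7,8,[9,2,5,7,3,6,8,0,1,4]), (7,9,[9,5,2,7,6,3,8,0,4,1]), (8,9,[9,5,7,2,6,8,3,4,0,1])]"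

lemma autT_ok: "list_all (\<lambda>(x, y, p). is_aut p \<and> p ! x = 0 \<and> (x = y \<or> p ! y = 7 \<or> p ! y = 1)) autT"
  unfolding autT_def is_aut_def by code_simp

lemma autT_cover: "list_all (\<lambda>x. list_all (\<lambda>y. x \<le> y \<longrightarrow> list_ex (\<lambda>(a, b, _). a = x \<and> b = y) autT)
    [0,1,2,3,4,5,6,7,8,9]) [0,1,2,3,4,5,6,7,8,9]"
  unfolding autT_def by code_simp

lemma get_aut:
  assumes "x \<in> V10" "y \<in> V10" "x \<le> y"
  obtains p where "is_aut p" "p ! x = 0" "x = y \<or> p ! y = 7 \<or> p ! y = 1"
proof -
  have xs: "x \<in> set [0,1,2,3,4,5,6,7,8,9]" "y \<in> set [0,1,2,3,4,5,6,7,8,9]"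
    by (simp only: set_vl assms(1,2))+
  have c1: "\<forall>x\<in>set [0,1,2,3,4,5,6,7,8,9]. \<forall>y\<in>set [0,1,2,3,4,5,6,7,8,9].
      x \<le> y \<longrightarrow> (\<exists>e\<in>set autT. (\<lambda>(a, b, _). a = x \<and> b = y) e)"
    using autT_cover by (simp only: list_all_iff list_ex_iff)
  have "\<exists>e\<in>set autT. (\<lambda>(a, b, _). a = x \<and> b = y) e" using c1 xs assms(3) by blast
  then obtain q where q: "(x, y, q) \<in> set autT" by auto
  have c2: "\<forall>e\<in>set autT. (\<lambda>(x, y, p). is_aut p \<and> p ! x = 0 \<and> (x = y \<or> p ! y = 7 \<or> p ! y = 1)) e"
    using autT_ok by (simp only: list_all_iff)
  have "(\<lambda>(x, y, p). is_aut p \<and> p ! x = 0 \<and> (x = y \<or> p ! y = 7 \<or> p ! y = 1)) (x, y, q)"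
    using c2 q by (rule bspec)
  then show ?thesis using that by blast
qed

lemma fc_good:
  assumes "fc_partition V10 E10 Q" "5 \<le> card Q"
  shows "good Q"
proof -
  have P: "partition_on V10 Q" using assms(1) by (simp add: fc_partition_def)
  have h: "\<And>A. A \<in> Q \<Longrightarrow> \<not> FD10 A \<and> (\<exists>B\<in>Q. B \<noteq> A \<and> FD10 (A \<union> B))"
  proof -
    fix A assume A: "A \<in> Q"
    have AV: "A \<subseteq> V10" using part_sub[OF P A] .
    have "(card A = 1 \<and> FD10 A) \<or> (\<not> FD10 A \<and> (\<exists>B\<in>Q. B \<noteq> A \<and> fair_coalition V10 E10 A B))"
      using assms(1) A by (simp add: fc_partition_def)
    moreover have "\<not> (card A = 1 \<and> FD10 A)" using FD_card[OF AV] by auto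
    ultimately show "\<not> FD10 A \<and> (\<exists>B\<in>Q. B \<noteq> A \<and> FD10 (A \<union> B))"
      by (auto simp: fair_coalition_def)
  qed
  show ?thesis unfolding good_def using P assms(2) h by blast
qed

lemma core_gen:
  assumes g: "good Q" and r: "set r \<in> Q" and F: "set F = V10 - set r" "distinct F"
  shows "search n [r] [r] F"
proof (rule search_sound[OF g])
  have P: "partition_on V10 Q" using g by (simp add: good_def)
  have "\<Union>(Q - {set r}) = V10 - set r"
  proof
    show "\<Union>(Q - {set r}) \<subseteq> V10 - set r" using part_disj[OF P _ r] part_sub[OF P] by blast
    show "V10 - set r \<subseteq> \<Union>(Q - {set r})" using partition_onD1[OF P] by blast
  qed
  then show "sinv Q [r] [r] F" using r F by (auto simp: sinv_def)
qed

lemma core: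
  assumes "fc_partition V10 E10 Q" "5 \<le> card Q" "R \<in> Q" "R = {0} \<or> R = {0,7} \<or> R = {0,1}"
  shows False
proof -
  have g: "good Q" using fc_good[OF assms(1,2)] .
  consider "R = {0}" | "R = {0,7}" | "R = {0,1}" using assms(4) by blast
  then show False
  proof cases
    case 1
    have "search 12 [[0]] [[0]] [1,2,3,4,5,6,7,8,9]"
      by (rule core_gen[OF g]) (use assms(3) 1 in \<open>auto simp: V10_def\<close>)
    then show False using search0 by simp
  next
    case 2
    have "search 12 [[0,7]] [[0,7]] [1,2,3,4,5,6,8,9]"
      by (rule core_gen[OF g]) (use assms(3) 2 in \<open>auto simp: V10_def\<close>)
    then show False using search1 by simp
  next
    case 3
    have "search 12 [[0,1]] [[0,1]] [2,3,4,5,6,7,8,9]"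
      by (rule core_gen[OF g]) (use assms(3) 3 in \<open>auto simp: V10_def\<close>)
    then show False using search2 by simp
  qed
qed

lemma card_V10: "card V10 = 10" by (simp add: V10_def)

lemma main10:
  assumes fc: "fc_partition V10 E10 Q"
  shows "card Q \<le> 4"
proof (rule ccontr)
  assume "\<not> card Q \<le> 4"
  then have c5: "5 \<le> card Q" by simp
  have P: "partition_on V10 Q" using fc by (simp add: fc_partition_def)
  have finQ: "finite Q" using finite_elements[OF finite_V10 P] .
  obtain X where X: "X \<in> Q" "card X \<le> 2"
  proof (rule ccontr)
    assume "\<not> thesis"
    then have big: "\<forall>A\<in>Q. 3 \<le> card A" using that by force
    have fin: "\<And>A. A \<in> Q \<Longrightarrow> finite A" using part_sub[OF P] finite_V10 finite_subset by blast
    have "card V10 = card (\<Union>Q)" using partition_onD1[OF P] by simp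
    also have "\<dots> = (\<Sum>A\<in>Q. card A)" using card_Union_disjoint[OF partition_onD2[OF P] fin] .
    also have "\<dots> \<ge> (\<Sum>A\<in>Q. 3)" using big by (intro sum_mono) auto
    finally have "3 * card Q \<le> 10" using card_V10 by simp
    then show False using c5 by simp
  qed
  have XV: "X \<subseteq> V10" using part_sub[OF P X(1)] .
  have Xne: "X \<noteq> {}" using partition_onD3[OF P] X(1) by blast
  have finX: "finite X" using XV finite_V10 finite_subset by blast
  obtain x y where xy: "x \<in> V10" "y \<in> V10" "x \<le> y" "X = {x, y}"
  proof (cases "card X = 1")
    case True
    then obtain x where "X = {x}" using card_1_singletonE by blast
    then show ?thesis using that[of x x] XV by auto
  next
    case False
    then have "card X = 2" using X(2) Xne finX by (metis One_nat_def card_0_eq le_SucE numeral_2_eq_2 le_zero_eq)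
    then obtain a b where ab: "X = {a, b}" "a \<noteq> b" by (meson card_2_iff)
    show ?thesis
    proof (cases "a \<le> b")
      case True
      then show ?thesis using that[of a b] ab XV by auto
    next
      case False
      then show ?thesis using that[of b a] ab XV by (auto simp: insert_commute)
    qed
  qed
  obtain p where p: "is_aut p" "p ! x = 0" "x = y \<or> p ! y = 7 \<or> p ! y = 1"
    using get_aut[OF xy(1-3)] by blast
  have iso: "bij_betw ((!) p) V10 V10" "\<forall>u\<in>V10. \<forall>v\<in>V10. E10 u v \<longleftrightarrow> E10 (p ! u) (p ! v)"
    using is_aut_iso[OF p(1)] by blast+
  let ?Q = "(`) ((!) p) ` Q"
  have fc2: "fc_partition V10 E10 ?Q" and c2: "card ?Q = card Q" using iso_fc[OF iso fc] by blast+
  have R: "(!) p ` X \<in> ?Q" using X(1) by blast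
  have "(!) p ` X = {0} \<or> (!) p ` X = {0,7} \<or> (!) p ` X = {0,1}" using p(2,3) xy(4) by auto
  then show False using core[OF fc2 _ R] c2 c5 by simp
qed


definition vsl :: "nat set list" where
  "vsl = [{1,2},{1,3},{1,4},{1,5},{2,3},{2,4},{2,5},{3,4},{3,5},{4,5}]"

lemma petersen_V_eq: "petersen_V = set vsl"
proof
  show "set vsl \<subseteq> petersen_V" by (auto simp: vsl_def petersen_V_def)
  show "petersen_V \<subseteq> set vsl"
  proof
    fix S assume "S \<in> petersen_V"
    then have S: "S \<subseteq> {1..5}" "card S = 2" by (auto simp: petersen_V_def)
    then obtain a b where ab: "S = {a, b}" "a \<noteq> b" by (meson card_2_iff)
    have "a \<in> {1..5}" "b \<in> {1..5}" using S(1) ab(1) by auto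
    then have a: "a = 1 \<or> a = 2 \<or> a = 3 \<or> a = 4 \<or> a = 5" and b: "b = 1 \<or> b = 2 \<or> b = 3 \<or> b = 4 \<or> b = 5"
      by auto
    show "S \<in> set vsl" using a b ab by (auto simp: vsl_def doubleton_eq_iff)
  qed
qed

lemma distinct_vsl: "distinct vsl"
  by (simp add: vsl_def doubleton_eq_iff)

lemma g_bij: "bij_betw ((!) vsl) V10 petersen_V"
proof -
  have len: "length vsl = 10" by (simp add: vsl_def)
  have e1: "V10 = {..<length vsl}" using len V10_iff by auto
  have inj: "inj_on ((!) vsl) V10"
    unfolding e1 using distinct_vsl by (simp add: inj_on_def nth_eq_iff_index_eq)
  have "(!) vsl ` V10 = set vsl" unfolding e1 by (auto simp: set_conv_nth)
  then show ?thesis using inj petersen_V_eq by (simp add: bij_betw_def)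
qed

lemma g_adj_list:
  "list_all (\<lambda>i. list_all (\<lambda>j. (j \<in> set (nbl ! i)) = (vsl ! i \<inter> vsl ! j = {})) [0,1,2,3,4,5,6,7,8,9]) [0,1,2,3,4,5,6,7,8,9]"
  by (simp add: nbl_def vsl_def)

lemma g_adj: "\<forall>u\<in>V10. \<forall>v\<in>V10. E10 u v \<longleftrightarrow> petersen_E (vsl ! u) (vsl ! v)"
proof (intro ballI)
  fix u v assume uv: "u \<in> V10" "v \<in> V10"
  have u': "u \<in> set [0,1,2,3,4,5,6,7,8,9]" and v': "v \<in> set [0,1,2,3,4,5,6,7,8,9]"
    by (simp only: set_vl uv)+
  have "\<forall>i\<in>set [0,1,2,3,4,5,6,7,8,9]. \<forall>j\<in>set [0,1,2,3,4,5,6,7,8,9]. (j \<in> set (nbl ! i)) = (vsl ! i \<inter> vsl ! j = {})"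
    using g_adj_list by (simp only: list_all_iff)
  then have "(v \<in> set (nbl ! u)) = (vsl ! u \<inter> vsl ! v = {})" using u' v' by blast
  then show "E10 u v \<longleftrightarrow> petersen_E (vsl ! u) (vsl ! v)" using uv(1) by (simp add: E10_def petersen_E_def)
qed

lemma fdl_vals:
  "\<not> fdl [0]" "\<not> fdl [1]" "\<not> fdl [2,4,6,9]" "\<not> fdl [3,5,7,8]"
  "fdl [0,3,5,7,8]" "fdl [1,2,4,6,9]" "fdl [2,4,6,9,3,5,7,8]"
  by code_simp+

lemma FD_vals:
  "\<not> FD10 {0}" "\<not> FD10 {1}" "\<not> FD10 {2,4,6,9}" "\<not> FD10 {3,5,7,8}"
  "FD10 {0,3,5,7,8}" "FD10 {1,2,4,6,9}" "FD10 {2,4,6,9,3,5,7,8}"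
proof -
  have s: "set [0] \<subseteq> V10" "set [1] \<subseteq> V10" "set [2,4,6,9] \<subseteq> V10" "set [3,5,7,8] \<subseteq> V10"
    "set [0,3,5,7,8] \<subseteq> V10" "set [1,2,4,6,9] \<subseteq> V10" "set [2,4,6,9,3,5,7,8] \<subseteq> V10"
    by (simp_all add: V10_def)
  show "\<not> FD10 {0}" using fdl_correct[OF s(1)] fdl_vals(1) by simp
  show "\<not> FD10 {1}" using fdl_correct[OF s(2)] fdl_vals(2) by simp
  show "\<not> FD10 {2,4,6,9}" using fdl_correct[OF s(3)] fdl_vals(3) by simp
  show "\<not> FD10 {3,5,7,8}" using fdl_correct[OF s(4)] fdl_vals(4) by simp
  show "FD10 {0,3,5,7,8}" using fdl_correct[OF s(5)] fdl_vals(5) by simp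
  show "FD10 {1,2,4,6,9}" using fdl_correct[OF s(6)] fdl_vals(6) by simp
  show "FD10 {2,4,6,9,3,5,7,8}" using fdl_correct[OF s(7)] fdl_vals(7) by simp
qed

definition Q4 :: "nat set set" where "Q4 = {{0}, {1}, {2,4,6,9}, {3,5,7,8}}"

lemma Q4_fc: "fc_partition V10 E10 Q4"
proof -
  have part: "partition_on V10 Q4"
    by (rule partition_onI) (auto simp: Q4_def V10_def disjnt_def)
  have fc1: "fair_coalition V10 E10 {0} {3,5,7,8}"
    unfolding fair_coalition_def using FD_vals by (simp add: V10_def insert_commute)
  have fc2: "fair_coalition V10 E10 {1} {2,4,6,9}"
    unfolding fair_coalition_def using FD_vals by (simp add: V10_def insert_commute)
  have fc3: "fair_coalition V10 E10 {2,4,6,9} {1}"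
    unfolding fair_coalition_def using FD_vals by (simp add: V10_def insert_commute)
  have fc4: "fair_coalition V10 E10 {3,5,7,8} {0}"
    unfolding fair_coalition_def using FD_vals by (simp add: V10_def insert_commute)
  show ?thesis unfolding fc_partition_def
  proof (intro conjI part ballI)
    fix A assume "A \<in> Q4"
    then consider "A = {0}" | "A = {1}" | "A = {2,4,6,9}" | "A = {3,5,7,8}" by (auto simp: Q4_def)
    then show "(card A = 1 \<and> FD10 A) \<or> (\<not> FD10 A \<and> (\<exists>B\<in>Q4. B \<noteq> A \<and> fair_coalition V10 E10 A B))"
    proof cases
      case 1 then show ?thesis using FD_vals fc1 by (auto simp: Q4_def)
    next
      case 2 then show ?thesis using FD_vals fc2 by (auto simp: Q4_def)
    next
      case 3 then show ?thesis using FD_vals fc3 by (auto simp: Q4_def)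
    next
      case 4 then show ?thesis using FD_vals fc4 by (auto simp: Q4_def)
    qed
  qed
qed

lemma card_Q4: "card Q4 = 4"
proof -
  have d: "{2,4,6,9::nat} \<noteq> {3,5,7,8}"
  proof
    assume "{2,4,6,9::nat} = {3,5,7,8}"
    then have "(2::nat) \<in> {3,5,7,8}" by blast
    then show False by simp
  qed
  show ?thesis using d by (simp add: Q4_def)
qed

lemma petersen_upper:
  assumes "fc_partition petersen_V petersen_E P"
  shows "card P \<le> 4"
proof -
  have iso: "bij_betw (inv_into V10 ((!) vsl)) petersen_V V10"
    "\<forall>u\<in>petersen_V. \<forall>v\<in>petersen_V. petersen_E u v \<longleftrightarrow> E10 (inv_into V10 ((!) vsl) u) (inv_into V10 ((!) vsl) v)"
    using iso_inv[OF g_bij g_adj] by blast+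
  have "fc_partition V10 E10 ((`) (inv_into V10 ((!) vsl)) ` P) \<and> card ((`) (inv_into V10 ((!) vsl)) ` P) = card P"
    by (rule iso_fc[OF iso assms])
  then show ?thesis using main10 by metis
qed

lemma petersen_lower: "\<exists>P. fc_partition petersen_V petersen_E P \<and> card P = 4"
proof -
  have "fc_partition petersen_V petersen_E ((`) ((!) vsl) ` Q4) \<and> card ((`) ((!) vsl) ` Q4) = card Q4"
    by (rule iso_fc[OF g_bij g_adj Q4_fc])
  then show ?thesis using card_Q4 by metis
qed

theorem theorem3p3:
  shows "fair_coalition_number petersen_V petersen_E = 4"
proof -
  let ?S = "{card P | P. fc_partition petersen_V petersen_E P}"
  have le: "\<forall>n\<in>?S. n \<le> 4" using petersen_upper by blast
  obtain P where P: "fc_partition petersen_V petersen_E P" "card P = 4" using petersen_lower by blast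
  have mem: "4 \<in> ?S" using P by force
  have fin: "finite ?S"
  proof (rule finite_subset)
    show "?S \<subseteq> {..4}" using le by auto
  qed simp
  show ?thesis unfolding fair_coalition_number_def
    by (rule Max_eqI[OF fin]) (use le mem in auto)
qed

end
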